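(* Let $n \geq 2k \geq 4$ and let $\mathcal F, \mathcal G \subset \binom{[n]}{k}$ be non-trivial, cross-intersecting, initial families. For $P \subset [k+1]$ let $\mathcal F(P) = \{F \setminus P : F \in \mathcal F,\ F \cap [k+1] = P\}$ and $\mathcal G(P) = \{G \setminus P : G \in \mathcal G,\ G \cap [k+1] = P\}$. Let $2 \leq i \leq k/2$ and let $P, Q \in \binom{[k+1]}{i}$ be disjoint. Then $$|\mathcal F(P)| + |\mathcal G(Q)| + |\mathcal G([k+1]\setminus P)| + |\mathcal F([k+1]\setminus Q)| \leq \binom{n-k-1}{k-i} + \binom{n-k-1}{i-1}.$$
   Context: Families are cross-intersecting if every member of one meets every member of the other; a non-empty family is non-trivial if the intersection of all its members is empty. For $k$-sets $A=\{x_1<\dots<x_k\}$, $B=\{y_1<\dots<y_k\}$, $A\prec B$ means $x_i\le y_i$ for all $i$; a family is initial if $A\prec B\in\mathcal F$ implies $A\in\mathcal F$. *)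

theory Defs
  imports Main
begin

definition ksets :: "nat set \<Rightarrow> nat \<Rightarrow> nat set set" where
  "ksets X k = {A. A \<subseteq> X \<and> card A = k}"

definition shift_le :: "nat set \<Rightarrow> nat set \<Rightarrow> bool" where
  "shift_le A B \<longleftrightarrow> finite A \<and> finite B \<and> card A = card B \<and>
     (\<forall>i < card A. sorted_list_of_set A ! i \<le> sorted_list_of_set B ! i)"

definition cross_intersecting :: "nat set set \<Rightarrow> nat set set \<Rightarrow> bool" where
  "cross_intersecting F G \<longleftrightarrow> (\<forall>A\<in>F. \<forall>B\<in>G. A \<inter> B \<noteq> {})"

definition non_trivial :: "nat set set \<Rightarrow> bool" where
  "non_trivial F \<longleftrightarrow> F \<noteq> {} \<and> \<Inter>F = {}"

definition initial :: "nat \<Rightarrow> nat \<Rightarrow> nat set set \<Rightarrow> bool" where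
  "initial n k F \<longleftrightarrow> (\<forall>A \<in> ksets {1..n} k. \<forall>B\<in>F. shift_le A B \<longrightarrow> A \<in> F)"

definition restr :: "nat \<Rightarrow> nat set set \<Rightarrow> nat set \<Rightarrow> nat set set" where
  "restr k F P = {A - P | A. A \<in> F \<and> A \<inter> {1..k+1} = P}"

end

theory Submission
  imports Defs Complex_Main
begin


lemma card_ksets: "finite R \<Longrightarrow> card (ksets R a) = card R choose a"
  unfolding ksets_def by (rule n_subsets)

lemma finite_ksets: "finite R \<Longrightarrow> finite (ksets R a)"
  unfolding ksets_def by auto

lemma card_disj_ksets:
  assumes "finite R" "S \<subseteq> R"
  shows "card {T \<in> ksets R b. S \<inter> T = {}} = (card R - card S) choose b"
proof -
  have "{T \<in> ksets R b. S \<inter> T = {}} = ksets (R - S) b" unfolding ksets_def by auto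
  then show ?thesis using assms card_ksets[of "R - S" b]
    by (simp add: card_Diff_subset finite_subset)
qed

lemma cross_bound:
  assumes fin: "finite R" and A: "A \<subseteq> ksets R a" and B: "B \<subseteq> ksets R b"
    and cr: "\<forall>S\<in>A. \<forall>T\<in>B. S \<inter> T \<noteq> {}"
  shows "card B * ((card R - b) choose a) \<le> ((card R choose a) - card A) * ((card R - a) choose b)"
proof -
  let ?S1 = "SIGMA T:B. {S \<in> ksets R a. T \<inter> S = {}}"
  let ?S2 = "SIGMA S:(ksets R a - A). {T \<in> ksets R b. S \<inter> T = {}}"
  have finA: "finite A" using A finite_ksets[OF fin] finite_subset by blast
  have finB: "finite B" using B finite_ksets[OF fin] finite_subset by blast
  have c1: "card ?S1 = card B * ((card R - b) choose a)"
  proof -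
    have "card ?S1 = (\<Sum>T\<in>B. card {S \<in> ksets R a. T \<inter> S = {}})"
      using finB fin by (simp add: finite_ksets)
    also have "\<dots> = (\<Sum>T\<in>B. (card R - b) choose a)"
    proof (rule sum.cong[OF refl])
      fix T assume "T \<in> B"
      then have "T \<subseteq> R" "card T = b" using B by (auto simp: ksets_def)
      then show "card {S \<in> ksets R a. T \<inter> S = {}} = (card R - b) choose a"
        using card_disj_ksets[OF fin, of T a] by simp
    qed
    finally show ?thesis by simp
  qed
  have c2: "card ?S2 = ((card R choose a) - card A) * ((card R - a) choose b)"
  proof -
    have "card ?S2 = (\<Sum>S\<in>ksets R a - A. card {T \<in> ksets R b. S \<inter> T = {}})"
      using fin by (simp add: finite_ksets)
    also have "\<dots> = (\<Sum>S\<in>ksets R a - A. (card R - a) choose b)"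
    proof (rule sum.cong[OF refl])
      fix S assume "S \<in> ksets R a - A"
      then have "S \<subseteq> R" "card S = a" by (auto simp: ksets_def)
      then show "card {T \<in> ksets R b. S \<inter> T = {}} = (card R - a) choose b"
        using card_disj_ksets[OF fin, of S b] by simp
    qed
    also have "\<dots> = card (ksets R a - A) * ((card R - a) choose b)" by simp
    also have "card (ksets R a - A) = (card R choose a) - card A"
      using A finA by (simp add: card_Diff_subset card_ksets fin)
    finally show ?thesis .
  qed
  have "card ?S1 \<le> card ?S2"
  proof (rule card_inj_on_le[where f = "\<lambda>(T,S). (S,T)"])
    show "inj_on (\<lambda>(T,S). (S,T)) ?S1" by (auto simp: inj_on_def)
    show "(\<lambda>(T,S). (S,T)) ` ?S1 \<subseteq> ?S2" using cr B by auto
    show "finite ?S2" using fin by (simp add: finite_ksets)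
  qed
  then show ?thesis using c1 c2 by simp
qed

lemma card_super_ksets:
  assumes fin: "finite R" and T: "T \<subseteq> R" "card T = b" and ba: "b \<le> a"
  shows "card {S \<in> ksets R a. T \<subseteq> S} = (card R - b) choose (a - b)"
proof -
  have finT: "finite T" using T fin finite_subset by blast
  have "{S \<in> ksets R a. T \<subseteq> S} = (\<lambda>U. U \<union> T) ` ksets (R - T) (a - b)"
  proof (rule set_eqI, rule iffI)
    fix S assume S: "S \<in> {S \<in> ksets R a. T \<subseteq> S}"
    then have "S - T \<in> ksets (R - T) (a - b)" using T finT
      by (auto simp: ksets_def card_Diff_subset)
    moreover have "S = (S - T) \<union> T" using S by auto
    ultimately show "S \<in> (\<lambda>U. U \<union> T) ` ksets (R - T) (a - b)" by blast
  next
    fix S assume "S \<in> (\<lambda>U. U \<union> T) ` ksets (R - T) (a - b)"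
    then obtain U where U: "U \<subseteq> R - T" "card U = a - b" "S = U \<union> T" by (auto simp: ksets_def)
    have "finite U" using U fin finite_subset by blast
    have "U \<inter> T = {}" using U by auto
    then have "card S = card U + card T" using \<open>finite U\<close> finT U(3) by (simp add: card_Un_disjoint)
    then have "card S = a" using U T ba by simp
    then show "S \<in> {S \<in> ksets R a. T \<subseteq> S}" using U T by (auto simp: ksets_def)
  qed
  moreover have "inj_on (\<lambda>U. U \<union> T) (ksets (R - T) (a - b))"
    by (auto simp: inj_on_def ksets_def)
  ultimately show ?thesis using card_ksets[of "R - T" "a - b"] fin T finT
    by (simp add: card_image card_Diff_subset)
qed

lemma shadow_bound:
  assumes fin: "finite R" and A: "A \<subseteq> ksets R a" and B: "B \<subseteq> ksets R b" and ba: "b \<le> a"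
    and sh: "\<forall>S\<in>A. \<forall>T. T \<subseteq> S \<and> card T = b \<longrightarrow> T \<in> B"
  shows "card A * (a choose b) \<le> card B * ((card R - b) choose (a - b))"
proof -
  let ?S1 = "SIGMA S:A. {T. T \<subseteq> S \<and> card T = b}"
  let ?S2 = "SIGMA T:B. {S \<in> ksets R a. T \<subseteq> S}"
  have finA: "finite A" using A finite_ksets[OF fin] finite_subset by blast
  have finB: "finite B" using B finite_ksets[OF fin] finite_subset by blast
  have c1: "card ?S1 = card A * (a choose b)"
  proof -
    have "card ?S1 = (\<Sum>S\<in>A. card {T. T \<subseteq> S \<and> card T = b})"
    proof (rule card_SigmaI[OF finA], rule ballI)
      fix S assume "S \<in> A"
      then have "finite S" using A fin by (auto simp: ksets_def intro: finite_subset)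
      then show "finite {T. T \<subseteq> S \<and> card T = b}" by simp
    qed
    also have "\<dots> = (\<Sum>S\<in>A. a choose b)"
    proof (rule sum.cong[OF refl])
      fix S assume "S \<in> A"
      then have "finite S" "card S = a" using A fin by (auto simp: ksets_def intro: finite_subset)
      then show "card {T. T \<subseteq> S \<and> card T = b} = a choose b" using n_subsets[of S b] by simp
    qed
    finally show ?thesis by simp
  qed
  have c2: "card ?S2 = card B * ((card R - b) choose (a - b))"
  proof -
    have "card ?S2 = (\<Sum>T\<in>B. card {S \<in> ksets R a. T \<subseteq> S})"
      using finB fin by (simp add: finite_ksets)
    also have "\<dots> = (\<Sum>T\<in>B. (card R - b) choose (a - b))"
    proof (rule sum.cong[OF refl])
      fix T assume "T \<in> B"
      then have "T \<subseteq> R" "card T = b" using B by (auto simp: ksets_def)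
      then show "card {S \<in> ksets R a. T \<subseteq> S} = (card R - b) choose (a - b)"
        using card_super_ksets[OF fin _ _ ba] by simp
    qed
    finally show ?thesis by simp
  qed
  have "card ?S1 \<le> card ?S2"
  proof (rule card_inj_on_le[where f = "\<lambda>(S,T). (T,S)"])
    show "inj_on (\<lambda>(S,T). (T,S)) ?S1" by (auto simp: inj_on_def)
    show "(\<lambda>(S,T). (T,S)) ` ?S1 \<subseteq> ?S2" using sh A by auto
    show "finite ?S2" using fin finB by (simp add: finite_ksets)
  qed
  then show ?thesis using c1 c2 by simp
qed



lemma nth_le_iff:
  fixes X :: "nat set"
  assumes fin: "finite X" and j: "j < card X"
  shows "(sorted_list_of_set X ! j \<le> t) \<longleftrightarrow> j < card {x\<in>X. x \<le> t}"
proof -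
  define xs where "xs = sorted_list_of_set X"
  have s: "sorted xs" and d: "distinct xs" and sx: "set xs = X" and lx: "length xs = card X"
    using fin by (auto simp: xs_def)
  have fX: "finite {x\<in>X. x \<le> t}" using fin by simp
  show ?thesis unfolding xs_def[symmetric]
  proof
    assume h: "xs ! j \<le> t"
    have "set (take (Suc j) xs) \<subseteq> {x\<in>X. x \<le> t}"
    proof
      fix x assume "x \<in> set (take (Suc j) xs)"
      then obtain l where l: "l < length (take (Suc j) xs)" "x = take (Suc j) xs ! l"
        by (auto simp: in_set_conv_nth)
      then have "l \<le> j" "x = xs ! l" "l < length xs" by auto
      then have "x \<le> xs ! j" using s j lx by (auto intro: sorted_nth_mono)
      then show "x \<in> {x\<in>X. x \<le> t}" using h \<open>x = xs ! l\<close> \<open>l < length xs\<close> sx by auto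
    qed
    then have "card (set (take (Suc j) xs)) \<le> card {x\<in>X. x \<le> t}" using fX by (rule card_mono[rotated])
    moreover have "card (set (take (Suc j) xs)) = Suc j" using d j lx by (simp add: distinct_card)
    ultimately show "j < card {x\<in>X. x \<le> t}" by simp
  next
    assume h: "j < card {x\<in>X. x \<le> t}"
    show "xs ! j \<le> t"
    proof (rule ccontr)
      assume "\<not> xs ! j \<le> t"
      have "{x\<in>X. x \<le> t} \<subseteq> set (take j xs)"
      proof
        fix x assume x: "x \<in> {x\<in>X. x \<le> t}"
        then obtain l where l: "l < length xs" "x = xs ! l" using sx by (auto simp: in_set_conv_nth)
        have "l < j"
        proof (rule ccontr)
          assume "\<not> l < j"
          then have "xs ! j \<le> xs ! l" using s l by (auto intro: sorted_nth_mono)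
          then show False using x l \<open>\<not> xs ! j \<le> t\<close> by auto
        qed
        then show "x \<in> set (take j xs)" using l by (auto simp: in_set_conv_nth intro!: exI[of _ l])
      qed
      then have "card {x\<in>X. x \<le> t} \<le> card (set (take j xs))" by (rule card_mono[rotated]) simp
      also have "\<dots> = j" using d j lx by (simp add: distinct_card)
      finally show False using h by simp
    qed
  qed
qed

lemma shift_le_crit:
  fixes X Y :: "nat set"
  assumes "finite X" "finite Y" "card X = card Y"
    and c: "\<And>t. card {y\<in>Y. y \<le> t} \<le> card {x\<in>X. x \<le> t}"
  shows "shift_le X Y"
  unfolding shift_le_def
proof (intro conjI allI impI)
  fix j assume j: "j < card X"
  let ?t = "sorted_list_of_set Y ! j"
  have "j < card {y\<in>Y. y \<le> ?t}" using nth_le_iff[of Y j ?t] assms j by simp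
  also have "\<dots> \<le> card {x\<in>X. x \<le> ?t}" by (rule c)
  finally show "sorted_list_of_set X ! j \<le> ?t" using nth_le_iff[of X j ?t] assms j by simp
qed (use assms in auto)

lemma shift_le_special:
  fixes L1 L2 T E :: "nat set"
  assumes fin: "finite L2" "finite E" and sub: "L1 \<subseteq> L2" "T \<subseteq> E"
    and lt: "\<forall>x\<in>L2. \<forall>y\<in>E. x < y"
    and cd: "card L2 + card T = card L1 + card E"
  shows "shift_le (L2 \<union> T) (L1 \<union> E)"
proof -
  have fL1: "finite L1" and fT: "finite T" using fin sub finite_subset by auto
  have dX: "L2 \<inter> T = {}" and dY: "L1 \<inter> E = {}" using lt sub by fastforce+
  show ?thesis
  proof (rule shift_le_crit)
    show "finite (L2 \<union> T)" "finite (L1 \<union> E)" using fin fL1 fT by auto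
    show "card (L2 \<union> T) = card (L1 \<union> E)" using fin fL1 fT dX dY cd by (simp add: card_Un_disjoint)
  next
    fix t
    show "card {y \<in> L1 \<union> E. y \<le> t} \<le> card {x \<in> L2 \<union> T. x \<le> t}"
    proof (cases "\<exists>e\<in>E. e \<le> t")
      case False
      then have "{y \<in> L1 \<union> E. y \<le> t} \<subseteq> {x \<in> L2 \<union> T. x \<le> t}" using sub by auto
      then show ?thesis by (rule card_mono[rotated]) (use fin fT in auto)
    next
      case True
      then have L2t: "\<forall>x\<in>L2. x \<le> t" using lt by force
      have e1: "{y \<in> L1 \<union> E. y \<le> t} = L1 \<union> {y\<in>E. y \<le> t}" using L2t sub by auto
      have e2: "{x \<in> L2 \<union> T. x \<le> t} = L2 \<union> {y\<in>T. y \<le> t}" using L2t by auto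
      have c1: "card (L1 \<union> {y\<in>E. y \<le> t}) = card L1 + card {y\<in>E. y \<le> t}"
        using fL1 fin dY by (intro card_Un_disjoint) auto
      have c2: "card (L2 \<union> {y\<in>T. y \<le> t}) = card L2 + card {y\<in>T. y \<le> t}"
        using fT fin dX by (intro card_Un_disjoint) auto
      have "{y\<in>E. y \<le> t} \<subseteq> {y\<in>T. y \<le> t} \<union> (E - T)" by auto
      then have "card {y\<in>E. y \<le> t} \<le> card ({y\<in>T. y \<le> t} \<union> (E - T))"
        by (rule card_mono[rotated]) (use fin fT in auto)
      also have "\<dots> \<le> card {y\<in>T. y \<le> t} + card (E - T)" by (rule card_Un_le)
      also have "card (E - T) = card E - card T" using sub fT by (simp add: card_Diff_subset)
      finally have "card {y\<in>E. y \<le> t} \<le> card {y\<in>T. y \<le> t} + (card E - card T)" .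
      moreover have "card T \<le> card E" using sub fin by (simp add: card_mono)
      ultimately show ?thesis unfolding e1 e2 c1 c2 using cd by linarith
    qed
  qed
qed



lemma arith_core:
  fixes x1 x2 y1 y2 Na Nb :: real
  assumes pos: "0 < Na" "0 < Nb" "Nb \<le> Na" "0 \<le> x1" "0 \<le> x2"
    and h1: "y1 * Na \<le> (Na - x1) * Nb" and h2: "y2 * Na \<le> (Na - x2) * Nb"
    and h4: "x2 * Nb \<le> y1 * Na"
  shows "x1 + x2 + y1 + y2 \<le> Na + Nb"
proof -
  have "(x1 + x2) * Nb \<le> Na * Nb" using h1 h4 by (simp add: algebra_simps)
  then have s: "x1 + x2 \<le> Na" using pos by simp
  have "(x1 + x2 + y1 + y2) * Na = (x1 + x2) * Na + y1 * Na + y2 * Na" by (simp add: algebra_simps)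
  also have "\<dots> \<le> (x1 + x2) * Na + (Na - x1) * Nb + (Na - x2) * Nb" using h1 h2 by simp
  also have "\<dots> = (x1 + x2) * (Na - Nb) + 2 * Na * Nb" by (simp add: algebra_simps)
  also have "\<dots> \<le> Na * (Na - Nb) + 2 * Na * Nb" using s pos by (simp add: mult_right_mono)
  also have "\<dots> = (Na + Nb) * Na" by (simp add: algebra_simps)
  finally show ?thesis using pos by simp
qed



lemma restr_sub:
  assumes F: "F \<subseteq> ksets {1..n} k" and P: "P \<subseteq> {1..k+1}"
  shows "restr k F P \<subseteq> ksets {k+2..n} (k - card P)"
proof
  fix S assume "S \<in> restr k F P"
  then obtain A where A: "A \<in> F" "A \<inter> {1..k+1} = P" "S = A - P" by (auto simp: restr_def)
  have Ak: "A \<subseteq> {1..n}" "card A = k" using A F by (auto simp: ksets_def)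
  have "finite A" using Ak finite_subset by blast
  have "P \<subseteq> A" using A by auto
  have S1: "S \<subseteq> {k+2..n}" using A Ak by auto
  have "card S = card A - card P" using A \<open>P \<subseteq> A\<close> \<open>finite A\<close> by (simp add: card_Diff_subset finite_subset)
  then have "card S = k - card P" using Ak by simp
  with S1 show "S \<in> ksets {k+2..n} (k - card P)" by (simp add: ksets_def)
qed

lemma cross_restr:
  assumes "cross_intersecting F G" and "P \<inter> P' = {}"
  shows "\<forall>S\<in>restr k F P. \<forall>T\<in>restr k G P'. S \<inter> T \<noteq> {}"
proof (intro ballI)
  fix S T assume "S \<in> restr k F P" "T \<in> restr k G P'"
  then obtain A B where A: "A \<in> F" "A \<inter> {1..k+1} = P" "S = A - P"
    and B: "B \<in> G" "B \<inter> {1..k+1} = P'" "T = B - P'" by (auto simp: restr_def)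
  obtain x where x: "x \<in> A" "x \<in> B" using assms(1) A B unfolding cross_intersecting_def by blast
  have "x \<notin> {1..k+1}" using x A B assms(2) by blast
  then have "x \<in> S \<inter> T" using x A B by auto
  then show "S \<inter> T \<noteq> {}" by blast
qed

lemma shadow_restr:
  assumes F: "F \<subseteq> ksets {1..n} k" and ini: "initial n k F"
    and PQ: "P \<subseteq> Qc" "Qc \<subseteq> {1..k+1}" and cd: "card Qc + b = k" and kn: "k < n"
  shows "\<forall>S\<in>restr k F P. \<forall>T. T \<subseteq> S \<and> card T = b \<longrightarrow> T \<in> restr k F Qc"
proof (intro ballI allI impI)
  fix S T assume S: "S \<in> restr k F P" and T: "T \<subseteq> S \<and> card T = b"
  then obtain A where A: "A \<in> F" "A \<inter> {1..k+1} = P" "S = A - P" by (auto simp: restr_def)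
  have Ak: "A \<subseteq> {1..n}" "card A = k" using A F by (auto simp: ksets_def)
  have fA: "finite A" using Ak finite_subset by blast
  have PA: "P \<subseteq> A" using A by auto
  have Sr: "S \<subseteq> {k+2..n}" using A Ak by auto
  have fS: "finite S" using Sr finite_subset by blast
  have fQ: "finite Qc" using PQ finite_subset by blast
  have "card S = card A - card P" using A fA PA by (simp add: card_Diff_subset finite_subset)
  then have cS: "card S = k - card P" using Ak by simp
  have cP: "card P \<le> k" using PA fA Ak card_mono by metis
  have AS: "A = P \<union> S" using A by auto
  have lt: "\<forall>x\<in>Qc. \<forall>y\<in>S. x < y"
  proof (intro ballI)
    fix x y assume "x \<in> Qc" "y \<in> S"
    then have "x \<le> k+1" "k+2 \<le> y" using PQ Sr by auto
    then show "x < y" by simp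
  qed
  have sh: "shift_le (Qc \<union> T) (P \<union> S)"
    by (rule shift_le_special[OF fQ fS PQ(1) _ lt]) (use T cS cP cd in auto)
  have "Qc \<inter> T = {}" using PQ T Sr by fastforce
  moreover have "finite T" using fS T finite_subset by blast
  ultimately have cU: "card (Qc \<union> T) = k" using fQ T cd by (simp add: card_Un_disjoint)
  have "Qc \<subseteq> {1..n}" using PQ kn by auto
  moreover have "T \<subseteq> {1..n}" using T Sr by auto
  ultimately have "Qc \<union> T \<in> ksets {1..n} k" using cU by (simp add: ksets_def)
  then have "Qc \<union> T \<in> F" using ini A sh AS unfolding initial_def by metis
  moreover have "(Qc \<union> T) \<inter> {1..k+1} = Qc" using PQ T Sr by auto
  moreover have "T = (Qc \<union> T) - Qc" using \<open>Qc \<inter> T = {}\<close> by auto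
  ultimately show "T \<in> restr k F Qc" unfolding restr_def by blast
qed

theorem lemma3p2:
  fixes n k i :: nat and F G :: "nat set set" and P Q :: "nat set"
  assumes "4 \<le> 2 * k" and "2 * k \<le> n"
    and "F \<subseteq> ksets {1..n} k" and "G \<subseteq> ksets {1..n} k"
    and "non_trivial F" and "non_trivial G"
    and "cross_intersecting F G"
    and "initial n k F" and "initial n k G"
    and "2 \<le> i" and "2 * i \<le> k"
    and "P \<in> ksets {1..k+1} i" and "Q \<in> ksets {1..k+1} i" and "P \<inter> Q = {}"
  shows "card (restr k F P) + card (restr k G Q) + card (restr k G ({1..k+1} - P))
           + card (restr k F ({1..k+1} - Q))
         \<le> ((n - k - 1) choose (k - i)) + ((n - k - 1) choose (i - 1))"
proof -
  define R where "R = {k+2..n}"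
  define m where "m = n - k - 1"
  define a where "a = k - i"
  define b where "b = i - 1"
  have finR: "finite R" and cR: "card R = m" by (auto simp: R_def m_def)
  have Ps: "P \<subseteq> {1..k+1}" "card P = i" and Qs: "Q \<subseteq> {1..k+1}" "card Q = i"
    using assms(12,13) by (auto simp: ksets_def)
  have fP: "finite P" "finite Q" using Ps Qs finite_subset by blast+
  define Pc where "Pc = {1..k+1} - P"
  define Qc where "Qc = {1..k+1} - Q"
  have cPc: "card Pc = k + 1 - i" using Ps by (simp add: Pc_def card_Diff_subset fP)
  have cQc: "card Qc = k + 1 - i" using Qs by (simp add: Qc_def card_Diff_subset fP)
  have Pcs: "Pc \<subseteq> {1..k+1}" "Qc \<subseteq> {1..k+1}" by (auto simp: Pc_def Qc_def)
  have ab: "b < a" "a + b \<le> m" "b \<le> a" using assms by (auto simp: a_def b_def m_def)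
  define A1 where "A1 = restr k F P"
  define B1 where "B1 = restr k G Pc"
  define A2 where "A2 = restr k G Q"
  define B2 where "B2 = restr k F Qc"
  have kA1: "A1 \<subseteq> ksets R a" using restr_sub[OF assms(3) Ps(1)] Ps assms unfolding A1_def R_def a_def by simp
  have kA2: "A2 \<subseteq> ksets R a" using restr_sub[OF assms(4) Qs(1)] Qs assms unfolding A2_def R_def a_def by simp
  have kB1: "B1 \<subseteq> ksets R b" using restr_sub[OF assms(4) Pcs(1)] cPc assms
    unfolding B1_def R_def b_def by (simp add: Suc_diff_le)
  have kB2: "B2 \<subseteq> ksets R b" using restr_sub[OF assms(3) Pcs(2)] cQc assms
    unfolding B2_def R_def b_def by (simp add: Suc_diff_le)
  have c1: "\<forall>S\<in>A1. \<forall>T\<in>B1. S \<inter> T \<noteq> {}" unfolding A1_def B1_def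
    by (rule cross_restr[OF assms(7)]) (auto simp: Pc_def)
  have c2: "\<forall>S\<in>A2. \<forall>T\<in>B2. T \<inter> S \<noteq> {}" using cross_restr[OF assms(7), of Qc Q k] unfolding A2_def B2_def
    by (auto simp: Qc_def)
  have s2: "\<forall>S\<in>A2. \<forall>T. T \<subseteq> S \<and> card T = b \<longrightarrow> T \<in> B1" unfolding A2_def B1_def
    by (rule shadow_restr[OF assms(4) assms(9)]) (use Pcs cPc assms Qs Ps in \<open>auto simp: Pc_def b_def\<close>)
  define Na where "Na = m choose a"
  define Nb where "Nb = m choose b"
  define da where "da = (m - a) choose b"
  define db where "db = (m - b) choose a"
  define ca where "ca = a choose b"
  define cb where "cb = (m - b) choose (a - b)"
  have X1: "card B1 * db \<le> (Na - card A1) * da"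
    using cross_bound[OF finR kA1 kB1 c1] unfolding cR Na_def da_def db_def .
  have X2: "card B2 * db \<le> (Na - card A2) * da"
    using cross_bound[OF finR kA2 kB2] c2 unfolding cR Na_def da_def db_def by blast
  have S2: "card A2 * ca \<le> card B1 * cb"
    using shadow_bound[OF finR kA2 kB1 ab(3) s2] unfolding cR ca_def cb_def .
  have A1le: "card A1 \<le> Na" using card_mono[OF finite_ksets[OF finR] kA1] card_ksets[OF finR] cR Na_def by simp
  have A2le: "card A2 \<le> Na" using card_mono[OF finite_ksets[OF finR] kA2] card_ksets[OF finR] cR Na_def by simp
  have id1: "Na * da = Nb * db"
  proof -
    have "Na * da = (m choose (a + b)) * ((a + b) choose a)"
      using choose_mult[of a "a+b" m] ab unfolding Na_def da_def by simp
    also have "\<dots> = (m choose (a + b)) * ((a + b) choose b)"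
      using binomial_symmetric[of a "a+b"] by simp
    also have "\<dots> = Nb * db"
      using choose_mult[of b "a+b" m] ab unfolding Nb_def db_def by simp
    finally show ?thesis .
  qed
  have id2: "Na * ca = Nb * cb"
    using choose_mult[of b a m] ab unfolding Na_def ca_def Nb_def cb_def by simp
  have pNa: "0 < Na" using ab by (simp add: Na_def)
  have pNb: "0 < Nb" using ab by (simp add: Nb_def)
  have pda: "0 < da" using ab by (simp add: da_def)
  have pdb: "0 < db" using ab by (simp add: db_def)
  have pca: "0 < ca" using ab by (simp add: ca_def)
  have pcb: "0 < cb" using ab by (simp add: cb_def)
  have NbNa: "Nb \<le> Na"
  proof (cases "2 * a \<le> m")
    case True then show ?thesis unfolding Na_def Nb_def using ab by (intro binomial_mono) auto
  next
    case False
    then have "m choose b \<le> m choose (m - a)" using ab by (intro binomial_mono) auto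
    then show ?thesis unfolding Na_def Nb_def using ab binomial_symmetric[of a m] by simp
  qed
  define x1 where "x1 = real (card A1)"
  define x2 where "x2 = real (card A2)"
  define y1 where "y1 = real (card B1)"
  define y2 where "y2 = real (card B2)"
  have rX1: "y1 * db \<le> (Na - x1) * da" using X1 A1le unfolding x1_def y1_def
    by (metis of_nat_diff of_nat_le_iff of_nat_mult)
  have rX2: "y2 * db \<le> (Na - x2) * da" using X2 A2le unfolding x2_def y2_def
    by (metis of_nat_diff of_nat_le_iff of_nat_mult)
  have rS2: "x2 * ca \<le> y1 * cb" using S2 unfolding x2_def y1_def
    by (metis of_nat_le_iff of_nat_mult)
  have rid1: "real Na * da = real Nb * db" using id1 by (metis of_nat_mult)
  have rid2: "real Na * ca = real Nb * cb" using id2 by (metis of_nat_mult)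
  have h1: "y1 * Na \<le> (Na - x1) * Nb"
  proof -
    have "y1 * Na * db = Na * (y1 * db)" by simp
    also have "\<dots> \<le> Na * ((Na - x1) * da)" using rX1 pNa by (intro mult_left_mono) auto
    also have "\<dots> = (Na - x1) * (Na * da)" by simp
    also have "\<dots> = (Na - x1) * Nb * db" using rid1 by simp
    finally show ?thesis using pdb by simp
  qed
  have h2: "y2 * Na \<le> (Na - x2) * Nb"
  proof -
    have "y2 * Na * db = Na * (y2 * db)" by simp
    also have "\<dots> \<le> Na * ((Na - x2) * da)" using rX2 pNa by (intro mult_left_mono) auto
    also have "\<dots> = (Na - x2) * (Na * da)" by simp
    also have "\<dots> = (Na - x2) * Nb * db" using rid1 by simp
    finally show ?thesis using pdb by simp
  qed
  have h4: "x2 * Nb \<le> y1 * Na"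
  proof -
    have "x2 * Nb * cb = x2 * (Na * ca)" using rid2 by simp
    also have "\<dots> = Na * (x2 * ca)" by simp
    also have "\<dots> \<le> Na * (y1 * cb)" using rS2 pNa by (intro mult_left_mono) auto
    finally show ?thesis using pcb by (simp add: mult.commute)
  qed
  have "x1 + x2 + y1 + y2 \<le> real Na + real Nb"
    by (rule arith_core[OF _ _ _ _ _ h1 h2 h4]) (use pNa pNb NbNa in \<open>auto simp: x1_def x2_def\<close>)
  then have "card A1 + card A2 + card B1 + card B2 \<le> Na + Nb"
    unfolding x1_def x2_def y1_def y2_def by linarith
  then show ?thesis unfolding A1_def A2_def B1_def B2_def Na_def Nb_def m_def a_def b_def Pc_def Qc_def
    by simp
qed


end
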